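(* Let $H_i$ ($i\in\mathbb{N}$) and $H$ be continuous functions $[0,T]\times\mathbb{R}^n\times\mathbb{R}^n\to\mathbb{R}$, each satisfying (H1)–(H4) and (HLC). Let $(\mathbb{R}^{n+1},f_i,l_i)$ and $(\mathbb{R}^{n+1},f,l)$ be the Steiner representations of $H_i$ and $H$, respectively (as defined in the context). If $H_i$ converge to $H$ uniformly on compact subsets of $[0,T]\times\mathbb{R}^n\times\mathbb{R}^n$, then $f_i\to f$ and $l_i\to l$ uniformly on compact subsets of $[0,T]\times\mathbb{R}^n\times\mathbb{R}^{n+1}$.
   Context: Hypotheses on a function $H:[0,T]\times\mathbb{R}^n\times\mathbb{R}^n\to\mathbb{R}$: (H1) $H(\cdot,x,p)$ Lebesgue measurable; (H2) $H(t,\cdot,\cdot)$ continuous; (H3) $H(t,x,\cdot)$ convex; (H4) there is a measurable $c\ge0$ with $|H(t,x,p)-H(t,x,q)|\le c(t)(1+|x|)|p-q|$; (HLC) for every $R>0$ there is a measurable $k_R\ge0$ with $|H(t,x,p)-H(t,y,p)|\le k_R(t)(1+|p|)|x-y|$ for $x,y$ in the closed ball $\bar B_R$ of radius $R$ about $0$ and all $p$. $H^*(t,x,v)=\sup_p\{\langle v,p\rangle-H(t,x,p)\}$. Steiner representation of $H$: for $(t,x)$ let $E(t,x)=\mathrm{epi}\,H^*(t,x,\cdot)=\{(v,\eta)\in\mathbb{R}^n\times\mathbb{R}:H^*(t,x,v)\le\eta\}$ (a nonempty closed convex set). For $a\in\mathbb{R}^{n+1}$ put $\Phi(t,x,a)=E(t,x)\cap\bar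 B(a,2d(a,E(t,x)))$, where $d(a,K)=\inf_{\xi\in K}|a-\xi|$ and $\bar B(a,r)$ is the closed ball. For a nonempty compact convex $K\subset\mathbb{R}^m$ its Steiner point is $s_m(K)=m\int_{S^{m-1}}p\,\sigma(K,p)\,\mu(dp)$, with $\sigma(K,p)=\max_{y\in K}\langle p,y\rangle$ and $\mu$ the rotation-invariant probability measure on the unit sphere $S^{m-1}$. Set $e(t,x,a)=s_{n+1}(\Phi(t,x,a))$ and write $e(t,x,a)=(f(t,x,a),l(t,x,a))$ with $f\in\mathbb{R}^n$, $l\in\mathbb{R}$. *)

theory Defs
  imports "HOL-Analysis.Analysis"
begin

text \<open>R^n is modelled by a Euclidean space type 'a, R^(n+1) by 'a \<times> real.\<close>

definition conjH :: "(real \<Rightarrow> 'a::euclidean_space \<Rightarrow> 'a \<Rightarrow> real) \<Rightarrow> real \<Rightarrow> 'a \<Rightarrow> 'a \<Rightarrow> ereal" where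
  "conjH H t x v = (SUP p. ereal (inner v p - H t x p))"

definition epiConj :: "(real \<Rightarrow> 'a::euclidean_space \<Rightarrow> 'a \<Rightarrow> real) \<Rightarrow> real \<Rightarrow> 'a \<Rightarrow> ('a \<times> real) set" where
  "epiConj H t x = {(v, \<eta>). conjH H t x v \<le> ereal \<eta>}"

definition PhiS :: "(real \<Rightarrow> 'a::euclidean_space \<Rightarrow> 'a \<Rightarrow> real) \<Rightarrow> real \<Rightarrow> 'a \<Rightarrow> 'a \<times> real \<Rightarrow> ('a \<times> real) set" where
  "PhiS H t x a = epiConj H t x \<inter> cball a (2 * infdist a (epiConj H t x))"

definition supp_fun :: "'b::euclidean_space set \<Rightarrow> 'b \<Rightarrow> real" where
  "supp_fun K p = Sup ((\<lambda>y. inner p y) ` K)"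

text \<open>Rotation-invariant probability measure on the unit sphere, realised as the
  push-forward of the normalised Lebesgue measure on the unit ball under radial projection.\<close>
definition sphere_measure :: "'b::euclidean_space measure" where
  "sphere_measure = distr (uniform_measure lborel (ball 0 1)) borel (\<lambda>p. sgn p)"

definition steiner_point :: "'b::euclidean_space set \<Rightarrow> 'b" where
  "steiner_point K = real DIM('b) *\<^sub>R (\<integral>p. supp_fun K p *\<^sub>R p \<partial>sphere_measure)"

definition steiner_e :: "(real \<Rightarrow> 'a::euclidean_space \<Rightarrow> 'a \<Rightarrow> real) \<Rightarrow> real \<Rightarrow> 'a \<Rightarrow> 'a \<times> real \<Rightarrow> 'a \<times> real" where
  "steiner_e H t x a = steiner_point (PhiS H t x a)"

definition steiner_f :: "(real \<Rightarrow> 'a::euclidean_space \<Rightarrow> 'a \<Rightarrow> real) \<Rightarrow> real \<Rightarrow> 'a \<Rightarrow> 'a \<times> real \<Rightarrow> 'a" where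
  "steiner_f H t x a = fst (steiner_e H t x a)"

definition steiner_l :: "(real \<Rightarrow> 'a::euclidean_space \<Rightarrow> 'a \<Rightarrow> real) \<Rightarrow> real \<Rightarrow> 'a \<Rightarrow> 'a \<times> real \<Rightarrow> real" where
  "steiner_l H t x a = snd (steiner_e H t x a)"

definition hyp_H :: "real \<Rightarrow> (real \<Rightarrow> 'a::euclidean_space \<Rightarrow> 'a \<Rightarrow> real) \<Rightarrow> bool" where
  "hyp_H T H \<longleftrightarrow>
     (\<forall>x p. (\<lambda>t. H t x p) \<in> borel_measurable (lebesgue_on {0..T})) \<and>
     (\<forall>t\<in>{0..T}. continuous_on UNIV (\<lambda>(x, p). H t x p)) \<and>
     (\<forall>t\<in>{0..T}. \<forall>x. convex_on UNIV (H t x)) \<and>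
     (\<exists>c. c \<in> borel_measurable (lebesgue_on {0..T}) \<and> (\<forall>t\<in>{0..T}. c t \<ge> 0) \<and>
        (\<forall>t\<in>{0..T}. \<forall>x p q. \<bar>H t x p - H t x q\<bar> \<le> c t * (1 + norm x) * norm (p - q))) \<and>
     (\<forall>R>0. \<exists>k. k \<in> borel_measurable (lebesgue_on {0..T}) \<and> (\<forall>t\<in>{0..T}. k t \<ge> 0) \<and>
        (\<forall>t\<in>{0..T}. \<forall>x\<in>cball 0 R. \<forall>y\<in>cball 0 R. \<forall>p.
           \<bar>H t x p - H t y p\<bar> \<le> k t * (1 + norm p) * norm (x - y)))"

end

theory Submission
  imports Defs "HOL-Probability.Probability_Measure"
begin

definition close_sets :: "'b::metric_space set \<Rightarrow> 'b set \<Rightarrow> real \<Rightarrow> bool" where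
  "close_sets A B \<delta> \<longleftrightarrow> (\<forall>y\<in>A. \<exists>z\<in>B. dist y z \<le> \<delta>) \<and> (\<forall>z\<in>B. \<exists>y\<in>A. dist y z \<le> \<delta>)"

lemma supp_fun_le:
  fixes A B :: "'b::euclidean_space set"
  assumes "compact B" "A \<noteq> {}" "\<forall>y\<in>A. \<exists>z\<in>B. dist y z \<le> \<delta>"
  shows "supp_fun A u \<le> supp_fun B u + \<delta> * norm u"
proof -
  have bddB: "bdd_above ((\<lambda>y. inner u y) ` B)"
  proof -
    obtain M where M: "\<forall>y\<in>B. norm y \<le> M" using compact_imp_bounded[OF assms(1)] bounded_iff by blast
    show ?thesis
    proof (rule bdd_aboveI2)
      fix y assume "y \<in> B"
      then show "inner u y \<le> norm u * M"
        by (meson M Cauchy_Schwarz_ineq2 abs_le_D1 mult_left_mono norm_ge_zero order_trans)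
    qed
  qed
  show ?thesis unfolding supp_fun_def
  proof (rule cSUP_least[OF assms(2)])
    fix y assume "y \<in> A"
    then obtain z where z: "z \<in> B" "dist y z \<le> \<delta>" using assms(3) by blast
    have "inner u y = inner u z + inner u (y - z)" by (simp add: inner_diff_right)
    also have "inner u (y - z) \<le> norm u * \<delta>"
      using z(2) by (smt (verit, best) Cauchy_Schwarz_ineq2 dist_norm mult_left_mono norm_ge_zero)
    also have "inner u z \<le> Sup ((\<lambda>y. inner u y) ` B)" using cSUP_upper[OF z(1) bddB] .
    finally show "inner u y \<le> Sup ((\<lambda>y. inner u y) ` B) + \<delta> * norm u" by (simp add: mult.commute)
  qed
qed

lemma supp_fun_diff:
  fixes A B :: "'b::euclidean_space set"
  assumes "compact A" "compact B" "A \<noteq> {}" "B \<noteq> {}" "close_sets A B \<delta>"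
  shows "\<bar>supp_fun A u - supp_fun B u\<bar> \<le> \<delta> * norm u"
proof -
  have "supp_fun A u \<le> supp_fun B u + \<delta> * norm u"
    using assms by (intro supp_fun_le) (auto simp: close_sets_def)
  moreover have "supp_fun B u \<le> supp_fun A u + \<delta> * norm u"
    using assms by (intro supp_fun_le) (auto simp: close_sets_def dist_commute)
  ultimately show ?thesis by linarith
qed

lemma supp_fun_lip:
  fixes A :: "'b::euclidean_space set"
  assumes "compact A" "A \<noteq> {}" "\<forall>y\<in>A. norm y \<le> M"
  shows "supp_fun A u \<le> supp_fun A v + M * norm (u - v)"
proof -
  have bdd: "bdd_above ((\<lambda>y. inner v y) ` A)"
    by (rule bdd_aboveI2[where M="norm v * M"])
       (meson assms(3) Cauchy_Schwarz_ineq2 abs_le_D1 mult_left_mono norm_ge_zero order_trans)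
  show ?thesis unfolding supp_fun_def
  proof (rule cSUP_least[OF assms(2)])
    fix y assume y: "y \<in> A"
    have "inner u y = inner v y + inner (u - v) y" by (simp add: inner_diff_left)
    also have "inner (u - v) y \<le> norm (u - v) * M"
      using y assms(3) by (smt (verit, best) Cauchy_Schwarz_ineq2 mult_left_mono norm_ge_zero)
    also have "inner v y \<le> Sup ((\<lambda>y. inner v y) ` A)" using cSUP_upper[OF y bdd] .
    finally show "inner u y \<le> Sup ((\<lambda>y. inner v y) ` A) + M * norm (u - v)" by (simp add: mult.commute)
  qed
qed

lemma supp_fun_cont:
  fixes A :: "'b::euclidean_space set"
  assumes "compact A" "A \<noteq> {}"
  shows "continuous_on UNIV (supp_fun A)"
proof -
  obtain M where M: "\<forall>y\<in>A. norm y \<le> M" using compact_imp_bounded[OF assms(1)] bounded_iff by blast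
  have "M \<ge> 0" using M assms(2) norm_ge_zero by (meson all_not_in_conv order_trans)
  have L: "\<bar>supp_fun A u - supp_fun A v\<bar> \<le> (M+1) * norm (u - v)" for u v
    using supp_fun_lip[OF assms M, of u v] supp_fun_lip[OF assms M, of v u] \<open>M \<ge> 0\<close>
    by (smt (verit, best) mult_right_mono norm_ge_zero norm_minus_commute)
  have "(M+1)-lipschitz_on UNIV (supp_fun A)"
    by (rule lipschitz_onI) (use L \<open>M \<ge> 0\<close> in \<open>auto simp: dist_real_def dist_norm\<close>)
  then show ?thesis by (rule lipschitz_on_continuous_on)
qed

lemma prob_M: "prob_space (uniform_measure lborel (ball (0::'b::euclidean_space) 1))"
  by (rule prob_space_uniform_measure) (use unit_ball_vol_pos[of "real DIM('b)"] in \<open>auto simp: emeasure_ball simp del: unit_ball_vol_pos\<close>)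

lemma steiner_integrable:
  fixes A :: "'b::euclidean_space set"
  assumes "compact A" "A \<noteq> {}"
  shows "integrable sphere_measure (\<lambda>p. supp_fun A p *\<^sub>R p)"
    and "integrable (uniform_measure lborel (ball (0::'b) 1)) (\<lambda>p. supp_fun A (sgn p) *\<^sub>R sgn p)"
proof -
  interpret P: prob_space "uniform_measure lborel (ball (0::'b) 1)" by (rule prob_M)
  have meas: "(\<lambda>p. supp_fun A p *\<^sub>R p) \<in> borel_measurable borel"
    by (intro borel_measurable_continuous_onI continuous_intros supp_fun_cont[OF assms]
        continuous_on_compose2[OF supp_fun_cont[OF assms]]) auto
  obtain M where M: "\<forall>y\<in>A. norm y \<le> M" using compact_imp_bounded[OF assms(1)] bounded_iff by blast
  have bnd: "norm (supp_fun A (sgn p) *\<^sub>R sgn p) \<le> \<bar>supp_fun A 0\<bar> + \<bar>M\<bar>" for p :: 'b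
  proof -
    have n1: "norm (sgn p) \<le> 1" by (simp add: norm_sgn)
    have l1: "supp_fun A (sgn p) \<le> supp_fun A 0 + M * norm (sgn p - 0)"
      by (rule supp_fun_lip[OF assms M])
    have l2: "supp_fun A 0 \<le> supp_fun A (sgn p) + M * norm (0 - sgn p)"
      by (rule supp_fun_lip[OF assms M])
    have "M * norm (sgn p) \<le> \<bar>M\<bar>"
      using n1 by (metis abs_ge_self abs_mult abs_norm_cancel mult_left_le order_trans abs_ge_zero)
    then have a: "\<bar>supp_fun A (sgn p)\<bar> \<le> \<bar>supp_fun A 0\<bar> + \<bar>M\<bar>"
      using l1 l2 by simp
    have "norm (supp_fun A (sgn p) *\<^sub>R sgn p) = \<bar>supp_fun A (sgn p)\<bar> * norm (sgn p)" by simp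
    also have "\<dots> \<le> \<bar>supp_fun A (sgn p)\<bar>" using n1 by (simp add: mult_left_le)
    finally show ?thesis using a by linarith
  qed
  show I2: "integrable (uniform_measure lborel (ball (0::'b) 1)) (\<lambda>p. supp_fun A (sgn p) *\<^sub>R sgn p)"
    by (rule P.integrable_const_bound[where B="\<bar>supp_fun A 0\<bar> + \<bar>M\<bar>"])
       (use bnd meas in \<open>auto\<close>)
  show "integrable sphere_measure (\<lambda>p. supp_fun A p *\<^sub>R p)"
    unfolding sphere_measure_def
    by (subst integrable_distr_eq) (use I2 meas in auto)
qed

lemma steiner_eq:
  fixes A :: "'b::euclidean_space set"
  assumes "compact A" "A \<noteq> {}"
  shows "steiner_point A = real DIM('b) *\<^sub>R
     (\<integral>p. supp_fun A (sgn p) *\<^sub>R sgn p \<partial>(uniform_measure lborel (ball (0::'b) 1)))"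
proof -
  have meas: "(\<lambda>p. supp_fun A p *\<^sub>R p) \<in> borel_measurable borel"
    by (intro borel_measurable_continuous_onI continuous_intros supp_fun_cont[OF assms]
        continuous_on_compose2[OF supp_fun_cont[OF assms]]) auto
  show ?thesis
    unfolding steiner_point_def sphere_measure_def
    by (subst integral_distr) (use meas in auto)
qed

lemma steiner_diff:
  fixes A B :: "'b::euclidean_space set"
  assumes "compact A" "compact B" "A \<noteq> {}" "B \<noteq> {}" "close_sets A B \<delta>"
  shows "norm (steiner_point A - steiner_point B) \<le> real DIM('b) * \<delta>"
proof -
  interpret P: prob_space "uniform_measure lborel (ball (0::'b) 1)" by (rule prob_M)
  let ?M = "uniform_measure lborel (ball (0::'b) 1)"
  have d0: "\<delta> \<ge> 0"
  proof -
    obtain y where "y \<in> A" using assms(3) by blast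
    then obtain z where "dist y z \<le> \<delta>" using assms(5) unfolding close_sets_def by blast
    then show ?thesis by (meson zero_le_dist order_trans)
  qed
  have "steiner_point A - steiner_point B = real DIM('b) *\<^sub>R
     (\<integral>p. (supp_fun A (sgn p) *\<^sub>R sgn p - supp_fun B (sgn p) *\<^sub>R sgn p) \<partial>?M)"
    unfolding steiner_eq[OF assms(1,3)] steiner_eq[OF assms(2,4)]
    by (subst Bochner_Integration.integral_diff)
       (auto intro!: steiner_integrable assms simp: scaleR_diff_right)
  also have "norm \<dots> \<le> real DIM('b) * \<delta>"
  proof -
    have "norm (\<integral>p. (supp_fun A (sgn p) *\<^sub>R sgn p - supp_fun B (sgn p) *\<^sub>R sgn p) \<partial>?M)
        \<le> (\<integral>p. norm (supp_fun A (sgn p) *\<^sub>R sgn p - supp_fun B (sgn p) *\<^sub>R sgn p) \<partial>?M)"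
      by (rule integral_norm_bound)
    also have "\<dots> \<le> (\<integral>p. \<delta> \<partial>?M)"
    proof (rule integral_mono)
      show "integrable ?M (\<lambda>p. norm (supp_fun A (sgn p) *\<^sub>R sgn p - supp_fun B (sgn p) *\<^sub>R sgn p))"
        by (intro integrable_norm Bochner_Integration.integrable_diff steiner_integrable assms)
      show "integrable ?M (\<lambda>p. \<delta>)" by simp
      fix p :: 'b
      have "norm (supp_fun A (sgn p) *\<^sub>R sgn p - supp_fun B (sgn p) *\<^sub>R sgn p)
          = \<bar>supp_fun A (sgn p) - supp_fun B (sgn p)\<bar> * norm (sgn p)"
        by (simp add: scaleR_diff_left[symmetric])
      also have "\<dots> \<le> (\<delta> * norm (sgn p)) * norm (sgn p)"
        by (intro mult_right_mono supp_fun_diff assms) auto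
      also have "\<dots> \<le> \<delta>"
        using d0 by (cases "p = 0") (auto simp: norm_sgn)
      finally show "norm (supp_fun A (sgn p) *\<^sub>R sgn p - supp_fun B (sgn p) *\<^sub>R sgn p) \<le> \<delta>" .
    qed
    also have "\<dots> = \<delta>" using P.prob_space by simp
    finally show ?thesis by (simp add: mult_left_mono)
  qed
  finally show ?thesis .
qed


definition Ep :: "('a::euclidean_space \<Rightarrow> real) \<Rightarrow> ('a \<times> real) set" where
  "Ep g = {(v, \<eta>). \<forall>p. inner v p - g p \<le> \<eta>}"

definition Ph :: "('a::euclidean_space \<Rightarrow> real) \<Rightarrow> 'a \<times> real \<Rightarrow> ('a \<times> real) set" where
  "Ph g a = Ep g \<inter> cball a (2 * infdist a (Ep g))"

lemma epiConj_eq: "epiConj H t x = Ep (H t x)"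
  unfolding epiConj_def Ep_def conjH_def by (auto simp: SUP_le_iff)

lemma PhiS_eq: "PhiS H t x a = Ph (H t x) a"
  unfolding PhiS_def Ph_def epiConj_eq ..

lemma Ep_INT: "Ep g = (\<Inter>p. {w. inner (p, -1) w \<le> g p})"
  unfolding Ep_def by (auto simp: inner_Pair inner_commute) (smt (verit))+

lemma closed_Ep: "closed (Ep g)"
  unfolding Ep_INT by (intro closed_INT ballI closed_halfspace_le)

lemma convex_Ep: "convex (Ep g)"
  unfolding Ep_INT by (intro convex_INT ballI convex_halfspace_le)

lemma convex_on_affine_add:
  assumes "convex_on UNIV g"
  shows "convex_on UNIV (\<lambda>p. g p + inner c p + d)"
proof -
  have "convex_on UNIV (\<lambda>p. inner c p + d)"
    unfolding convex_on_def
  proof (intro conjI ballI allI impI)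
    fix x y :: 'a and u v :: real
    assume "0 \<le> u" "0 \<le> v" "u + v = 1"
    then have "d = u * d + v * d" by (metis distrib_right mult_1)
    then show "inner c (u *\<^sub>R x + v *\<^sub>R y) + d \<le> u * (inner c x + d) + v * (inner c y + d)"
      by (simp add: inner_add_right algebra_simps)
  qed simp
  from convex_on_add[OF assms this] show ?thesis by (simp add: add.assoc)
qed

lemma sep_affine:
  fixes \<phi> :: "'a::euclidean_space \<Rightarrow> real" and D :: "('a \<times> real) set"
  assumes cv: "convex_on UNIV \<phi>" and ct: "continuous_on UNIV \<phi>"
    and D: "compact D" "convex D" "D \<noteq> {}" and below: "\<forall>(p, y)\<in>D. y < \<phi> p"
  shows "\<exists>s b. (\<forall>p. b + inner s p \<le> \<phi> p) \<and> (\<forall>(p, y)\<in>D. y < b + inner s p)"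
proof -
  let ?C = "epigraph UNIV \<phi>"
  have cC: "convex ?C" using cv by (simp add: convex_epigraph)
  have clC: "closed ?C"
    unfolding epigraph_def
    by (auto intro!: closed_Collect_le continuous_intros continuous_on_compose2[OF ct])
  have disj: "D \<inter> ?C = {}" using below by (auto simp: epigraph_def)
  obtain a b where ab: "\<forall>x\<in>D. inner a x < b" "\<forall>x\<in>?C. inner a x > b"
    using separating_hyperplane_compact_closed[OF D(2,1,3) cC clC disj] by blast
  obtain s' \<alpha> where a: "a = (s', \<alpha>)" by (cases a)
  have C1: "b < inner s' p + \<alpha> * \<phi> p" for p
    using ab(2) by (auto simp: epigraph_def a inner_Pair)
  have D1: "inner s' p + \<alpha> * y < b" if "(p, y) \<in> D" for p y
    using ab(1) that by (auto simp: a inner_Pair)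
  obtain p0 y0 where p0: "(p0, y0) \<in> D" using D(3) by auto
  have "y0 < \<phi> p0" using below p0 by auto
  have "\<alpha> * y0 < \<alpha> * \<phi> p0" using C1[of p0] D1[OF p0] by linarith
  then have apos: "\<alpha> > 0" using \<open>y0 < \<phi> p0\<close>
    by (smt (verit, best) mult_le_cancel_left)
  show ?thesis
  proof (intro exI conjI allI ballI)
    fix p
    show "b / \<alpha> + inner (- (1/\<alpha>) *\<^sub>R s') p \<le> \<phi> p"
      using C1[of p] apos by (simp add: field_simps)
  next
    fix z assume "z \<in> D"
    then obtain p y where z: "z = (p, y)" "(p, y) \<in> D" by (cases z) auto
    show "case z of (p, y) \<Rightarrow> y < b / \<alpha> + inner (- (1/\<alpha>) *\<^sub>R s') p"
      using D1[OF z(2)] apos z(1) by (simp add: field_simps)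
  qed
qed

lemma Ep_nonempty:
  fixes g :: "'a::euclidean_space \<Rightarrow> real"
  assumes "convex_on UNIV g" "continuous_on UNIV g"
  shows "Ep g \<noteq> {}"
proof -
  obtain s b where sb: "\<forall>p. b + inner s p \<le> g p"
    using sep_affine[OF assms, of "{(0, g 0 - 1)}"] by auto
  have "(s, -b) \<in> Ep g" using sb unfolding Ep_def by (auto simp: algebra_simps)
  then show ?thesis by blast
qed

lemma Ph_compact: "compact (Ph g a)"
  unfolding Ph_def by (intro closed_Int_compact closed_Ep compact_cball)

lemma Ph_nonempty:
  assumes "Ep g \<noteq> {}"
  shows "Ph g a \<noteq> {}"
proof -
  obtain c where c: "c \<in> Ep g" "infdist a (Ep g) = dist a c"
    using infdist_attains_inf[OF closed_Ep assms] by blast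
  then have "c \<in> Ph g a" unfolding Ph_def using infdist_nonneg[of a "Ep g"] by auto
  then show ?thesis by blast
qed

lemma freq_subseq:
  fixes P :: "nat \<Rightarrow> bool"
  assumes "frequently P sequentially"
  obtains r :: "nat \<Rightarrow> nat" where "strict_mono r" "\<And>k. P (r k)"
proof -
  have inf: "infinite {n. P n}" using assms by (simp add: frequently_cofinite[symmetric] cofinite_eq_sequentially)
  show ?thesis
    using that[of "enumerate {n. P n}"] strict_mono_enumerate[OF inf] enumerate_in_set[OF inf] by auto
qed

lemma eventually_subseq:
  assumes "strict_mono r" "eventually P sequentially"
  shows "eventually (\<lambda>k. P (r k)) sequentially"
  using filterlim_subseq[OF assms(1)] assms(2) by (simp add: filterlim_iff)


context
  fixes G :: "nat \<Rightarrow> 'a::euclidean_space \<Rightarrow> real" and g :: "'a \<Rightarrow> real"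
    and A :: "nat \<Rightarrow> 'a \<times> real" and a :: "'a \<times> real"
  assumes cvG: "\<And>k. convex_on UNIV (G k)" and ctG: "\<And>k. continuous_on UNIV (G k)"
    and cvg: "convex_on UNIV g" and ctg: "continuous_on UNIV g"
    and unif: "\<And>R e. e > 0 \<Longrightarrow> eventually (\<lambda>k. \<forall>p\<in>cball 0 R. \<bar>G k p - g p\<bar> \<le> e) sequentially"
    and Alim: "A \<longlonglongrightarrow> a"
begin

lemma aux_frac: "e > 0 \<Longrightarrow> (x::real) \<ge> 0 \<Longrightarrow> e / (2 * (x + 1)) * x < e / 2"
proof -
  assume e: "e > 0" and x: "x \<ge> 0"
  have "e / (2 * (x + 1)) * x = (e/2) * (x / (x+1))" by simp
  also have "x / (x + 1) < 1" using x by simp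
  then have "(e/2) * (x / (x+1)) < (e/2) * 1" using e by (intro mult_strict_left_mono) auto
  finally show ?thesis by simp
qed

lemma freq_subseq':
  fixes P :: "nat \<Rightarrow> bool"
  assumes "frequently P sequentially"
  shows "\<exists>r::nat\<Rightarrow>nat. strict_mono r \<and> (\<forall>k. P (r k))"
proof -
  have inf: "infinite {n. P n}" using assms by (simp add: frequently_cofinite[symmetric] cofinite_eq_sequentially)
  show ?thesis
    using strict_mono_enumerate[OF inf] enumerate_in_set[OF inf] by blast
qed

lemma pointwise: "(\<lambda>k. G k p) \<longlonglongrightarrow> g p"
proof (rule tendstoI)
  fix e :: real assume "e > 0"
  then have "eventually (\<lambda>k. \<forall>q\<in>cball 0 (norm p). \<bar>G k q - g q\<bar> \<le> e/2) sequentially"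
    by (intro unif) auto
  then show "eventually (\<lambda>k. dist (G k p) (g p) < e) sequentially"
    proof eventually_elim
    case (elim k)
    then have "\<bar>G k p - g p\<bar> \<le> e/2" by auto
    then show ?case using \<open>e > 0\<close> by (simp add: dist_real_def)
  qed
qed

lemma EpG_ne: "Ep (G k) \<noteq> {}" by (rule Ep_nonempty[OF cvG ctG])
lemma Epg_ne: "Ep g \<noteq> {}" by (rule Ep_nonempty[OF cvg ctg])

lemma lower:
  assumes w: "w \<in> Ep g" and e: "e > 0"
  shows "eventually (\<lambda>k. \<exists>w'\<in>Ep (G k). dist w w' < e) sequentially"
proof -
  obtain v \<eta> where wv: "w = (v, \<eta>)" by (cases w)
  have gw: "inner v p - g p \<le> \<eta>" for p using w wv by (auto simp: Ep_def)
  define e0 where "e0 = min 1 (e/4)"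
  have e0: "e0 > 0" "e0 \<le> 1" "3 * e0 < e" using e by (auto simp: e0_def)
  have g0: "g 0 + \<eta> \<ge> 0" using gw[of 0] by simp
  define R where "R = (g 0 + \<eta> + 3) / e0"
  have Rpos: "R > 0" using g0 e0 by (auto simp: R_def)
  show ?thesis
    using unif[OF e0(1), of R]
  proof eventually_elim
    case (elim k)
    define \<phi> where "\<phi> = (\<lambda>p. G k p + inner (- v) p + \<eta>)"
    have cv\<phi>: "convex_on UNIV \<phi>" unfolding \<phi>_def by (rule convex_on_affine_add[OF cvG])
    have ct\<phi>: "continuous_on UNIV \<phi>" unfolding \<phi>_def
      by (intro continuous_intros ctG)
    let ?D = "cball (0::'a) R \<times> {- 2 * e0}"
    have Dc: "compact ?D" by (intro compact_Times compact_cball) auto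
    have Dcv: "convex ?D" by (intro convex_Times convex_cball) auto
    have Dne: "?D \<noteq> {}" using Rpos by auto
    have below: "\<forall>(p, y)\<in>?D. y < \<phi> p"
    proof (clarify)
      fix p assume "p \<in> cball (0::'a) R"
      then have "\<bar>G k p - g p\<bar> \<le> e0" using elim by blast
      then show "- 2 * e0 < \<phi> p" using gw[of p] e0 by (simp add: \<phi>_def inner_minus_left)
    qed
    obtain s b where sb: "\<forall>p. b + inner s p \<le> \<phi> p" "\<forall>(p, y)\<in>?D. y < b + inner s p"
      using sep_affine[OF cv\<phi> ct\<phi> Dc Dcv Dne below] by blast
    have "(0, - 2 * e0) \<in> ?D" using Rpos by simp
    from bspec[OF sb(2) this] have b1: "- 2 * e0 < b" by simp
    have "\<bar>G k 0 - g 0\<bar> \<le> e0" using elim Rpos by auto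
    then have b2: "b \<le> g 0 + \<eta> + e0" using sb(1)[rule_format, of 0] by (simp add: \<phi>_def)
    have ns: "norm s < e0"
    proof (cases "s = 0")
      case True then show ?thesis using e0 by simp
    next
      case False
      define p where "p = - (R / norm s) *\<^sub>R s"
      have "norm p = R" using False Rpos by (simp add: p_def)
      then have "- 2 * e0 < b + inner s p" using sb(2) by auto
      also have "inner s p = - R * norm s"
        using False by (simp add: p_def power2_norm_eq_inner[symmetric] power2_eq_square)
      finally have "R * norm s < b + 2 * e0" by simp
      also have "\<dots> \<le> g 0 + \<eta> + 3" using b2 e0 by simp
      also have "\<dots> = R * e0" using e0 by (simp add: R_def)
      finally show ?thesis using Rpos by simp
    qed
    define w' where "w' = (v + s, \<eta> + 2 * e0)"
    have "w' \<in> Ep (G k)"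
      unfolding Ep_def w'_def
    proof (clarify)
      fix p
      have "b + inner s p \<le> G k p - inner v p + \<eta>" using sb(1) by (simp add: \<phi>_def inner_minus_left)
      then show "inner (v + s) p - G k p \<le> \<eta> + 2 * e0" using b1 by (simp add: inner_add_left)
    qed
    moreover have "dist w w' < e"
    proof -
      have "dist w w' = sqrt ((norm s)\<^sup>2 + (2 * e0)\<^sup>2)"
        by (simp add: wv w'_def dist_norm norm_Pair power2_eq_square)
      also have "\<dots> \<le> norm s + 2 * e0"
        by (rule order_trans[OF sqrt_add_le_add_sqrt]) (use e0 real_sqrt_abs[of "2*e0"] in \<open>auto simp del: power_mult_distrib\<close>)
      finally show ?thesis using ns e0 by simp
    qed
    ultimately show ?case by blast
  qed
qed

lemma upper:
  assumes r: "strict_mono r" and w: "\<And>k. w k \<in> Ep (G (r k))" and lim: "w \<longlonglongrightarrow> w0"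
  shows "w0 \<in> Ep g"
proof -
  obtain v0 \<eta>0 where w0: "w0 = (v0, \<eta>0)" by (cases w0)
  have "inner v0 p - g p \<le> \<eta>0" for p
  proof -
    have l1: "(\<lambda>k. inner (fst (w k)) p - G (r k) p) \<longlonglongrightarrow> inner v0 p - g p"
    proof (intro tendsto_intros)
      show "(\<lambda>k. fst (w k)) \<longlonglongrightarrow> v0" using tendsto_fst[OF lim] w0 by simp
      show "(\<lambda>k. G (r k) p) \<longlonglongrightarrow> g p" using LIMSEQ_subseq_LIMSEQ[OF pointwise r] by (simp add: o_def)
    qed
    have l2: "(\<lambda>k. snd (w k)) \<longlonglongrightarrow> \<eta>0" using tendsto_snd[OF lim] w0 by simp
    have "inner (fst (w k)) p - G (r k) p \<le> snd (w k)" for k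
      using w[of k] by (cases "w k") (auto simp: Ep_def)
    then show ?thesis by (intro tendsto_le[OF _ l2 l1]) auto
  qed
  then show ?thesis by (simp add: Ep_def w0)
qed

definition "dd k = infdist (A k) (Ep (G k))"
definition "d0 = infdist a (Ep g)"

lemma A_bounded: obtains B where "\<And>k. norm (A k) \<le> B"
  using convergent_imp_bounded[OF Alim] by (auto simp: bounded_iff)

lemma dd_upper:
  assumes e: "e > 0"
  shows "eventually (\<lambda>k. dd k < d0 + e) sequentially"
proof -
  obtain c where c: "c \<in> Ep g" "d0 = dist a c"
    using infdist_attains_inf[OF closed_Ep Epg_ne] unfolding d0_def by blast
  have "eventually (\<lambda>k. dist (A k) a < e/2) sequentially"
    using tendstoD[OF Alim, of "e/2"] e by simp
  moreover have "eventually (\<lambda>k. \<exists>w'\<in>Ep (G k). dist c w' < e/2) sequentially"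
    using lower[OF c(1), of "e/2"] e by simp
  ultimately show ?thesis
  proof eventually_elim
    case (elim k)
    then obtain w' where w': "w' \<in> Ep (G k)" "dist c w' < e/2" by blast
    have "dd k \<le> dist (A k) w'" unfolding dd_def by (rule infdist_le[OF w'(1)])
    also have "\<dots> \<le> dist (A k) a + dist a c + dist c w'" using dist_triangle[of "A k" w' c] dist_triangle[of "A k" c a] by linarith
    finally show ?case using elim w' c by simp
  qed
qed

lemma dd_lower:
  assumes e: "e > 0"
  shows "eventually (\<lambda>k. d0 - e < dd k) sequentially"
proof (rule ccontr)
  assume "\<not> ?thesis"
  then have "frequently (\<lambda>k. dd k \<le> d0 - e) sequentially"
    by (simp add: not_eventually not_less)
  from freq_subseq'[OF this] obtain r :: "nat \<Rightarrow> nat" where r: "strict_mono r" "\<And>k. dd (r k) \<le> d0 - e" by blast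
  have "\<forall>k. \<exists>y. y \<in> Ep (G (r k)) \<and> dd (r k) = dist (A (r k)) y"
  proof
    fix k
    obtain c where "c \<in> Ep (G (r k))" "infdist (A (r k)) (Ep (G (r k))) = dist (A (r k)) c"
      by (rule infdist_attains_inf[OF closed_Ep EpG_ne])
    then show "\<exists>y. y \<in> Ep (G (r k)) \<and> dd (r k) = dist (A (r k)) y" unfolding dd_def by blast
  qed
  from choice[OF this] obtain y where y': "\<forall>k. y k \<in> Ep (G (r k)) \<and> dd (r k) = dist (A (r k)) (y k)" by blast
  then have y: "\<And>k. y k \<in> Ep (G (r k))" "\<And>k. dd (r k) = dist (A (r k)) (y k)" by auto
  obtain B where B: "\<And>k. norm (A k) \<le> B" using A_bounded by blast
  have "norm (y k) \<le> B + d0" for k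
  proof -
    have "norm (y k) \<le> norm (A (r k)) + dist (A (r k)) (y k)"
      by (metis dist_commute dist_norm norm_triangle_sub)
    then show ?thesis using B[of "r k"] y(2)[of k] r(2)[of k] e by linarith
  qed
  then have "bounded (range y)" by (auto simp: bounded_iff)
  then obtain q y0 where q: "strict_mono q" "(y \<circ> q) \<longlonglongrightarrow> y0"
    using bounded_imp_convergent_subsequence by blast
  have y0: "y0 \<in> Ep g"
    by (rule upper[of "r \<circ> q" "y \<circ> q"]) (use q r y in \<open>auto intro: strict_mono_o\<close>)
  have "(\<lambda>k. dist (A (r (q k))) (y (q k))) \<longlonglongrightarrow> dist a y0"
  proof (intro tendsto_intros)
    show "(\<lambda>k. A (r (q k))) \<longlonglongrightarrow> a"
      using LIMSEQ_subseq_LIMSEQ[OF Alim strict_mono_o[OF r(1) q(1)]] by (simp add: o_def)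
    show "(\<lambda>k. y (q k)) \<longlonglongrightarrow> y0" using q(2) by (simp add: o_def)
  qed
  then have "dist a y0 \<le> d0 - e"
    by (rule tendsto_upperbound) (use r(2) y(2) in \<open>auto simp: o_def\<close>)
  moreover have "d0 \<le> dist a y0" unfolding d0_def by (rule infdist_le[OF y0])
  ultimately show False using e by simp
qed

lemma dd_lim: "dd \<longlonglongrightarrow> d0"
proof (rule tendstoI)
  fix e :: real assume "e > 0"
  have "eventually (\<lambda>k. dd k < d0 + e \<and> d0 - e < dd k) sequentially"
    using eventually_conj[OF dd_upper dd_lower] \<open>e > 0\<close> by simp
  then show "eventually (\<lambda>k. dist (dd k) d0 < e) sequentially"
    by (rule eventually_mono) (auto simp: dist_real_def abs_less_iff)
qed

lemma Ph_alt: "Ph (G k) (A k) = {y \<in> Ep (G k). dist (A k) y \<le> 2 * dd k}"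
  unfolding Ph_def dd_def by auto

lemma Ph_alt0: "Ph g a = {y \<in> Ep g. dist a y \<le> 2 * d0}"
  unfolding Ph_def d0_def by auto


lemma dd_bounded: obtains D where "\<And>k. dd k \<le> D"
proof -
  obtain D where "\<And>k. norm (dd k) \<le> D" using convergent_imp_bounded[OF dd_lim] by (auto simp: bounded_iff)
  then have "\<And>k. dd k \<le> D" by (metis abs_ge_self order_trans real_norm_def)
  then show ?thesis by (rule that)
qed

lemma part_i:
  assumes e: "e > 0"
  shows "eventually (\<lambda>k. \<forall>y\<in>Ph (G k) (A k). \<exists>z\<in>Ph g a. dist y z \<le> e) sequentially"
proof (rule ccontr)
  assume "\<not> ?thesis"
  then have "frequently (\<lambda>k. \<exists>y\<in>Ph (G k) (A k). \<forall>z\<in>Ph g a. dist y z > e) sequentially"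
    by (simp add: not_eventually not_le)
  from freq_subseq'[OF this] obtain r :: "nat \<Rightarrow> nat" where
    r: "strict_mono r" "\<And>k. \<exists>y\<in>Ph (G (r k)) (A (r k)). \<forall>z\<in>Ph g a. dist y z > e" by blast
  have "\<forall>k. \<exists>y. y \<in> Ph (G (r k)) (A (r k)) \<and> (\<forall>z\<in>Ph g a. dist y z > e)" using r(2) by blast
  from choice[OF this] obtain y where
    y': "\<forall>k. y k \<in> Ph (G (r k)) (A (r k)) \<and> (\<forall>z\<in>Ph g a. dist (y k) z > e)" by blast
  then have y: "\<And>k. y k \<in> Ep (G (r k))" "\<And>k. dist (A (r k)) (y k) \<le> 2 * dd (r k)"
    "\<And>k z. z \<in> Ph g a \<Longrightarrow> dist (y k) z > e" by (auto simp: Ph_alt)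
  obtain B where B: "\<And>k. norm (A k) \<le> B" using A_bounded by blast
  obtain D where D: "\<And>k. dd k \<le> D" using dd_bounded by blast
  have "norm (y k) \<le> B + 2 * D" for k
  proof -
    have "norm (y k) \<le> norm (A (r k)) + dist (A (r k)) (y k)"
      by (metis dist_commute dist_norm norm_triangle_sub)
    then show ?thesis using B[of "r k"] y(2)[of k] D[of "r k"] by linarith
  qed
  then have "bounded (range y)" by (auto simp: bounded_iff)
  then obtain q y0 where q: "strict_mono q" "(y \<circ> q) \<longlonglongrightarrow> y0"
    using bounded_imp_convergent_subsequence by blast
  have y0: "y0 \<in> Ep g"
    by (rule upper[of "r \<circ> q" "y \<circ> q"]) (use q r y in \<open>auto intro: strict_mono_o\<close>)
  have l1: "(\<lambda>k. dist (A (r (q k))) (y (q k))) \<longlonglongrightarrow> dist a y0"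
  proof (intro tendsto_intros)
    show "(\<lambda>k. A (r (q k))) \<longlonglongrightarrow> a"
      using LIMSEQ_subseq_LIMSEQ[OF Alim strict_mono_o[OF r(1) q(1)]] by (simp add: o_def)
    show "(\<lambda>k. y (q k)) \<longlonglongrightarrow> y0" using q(2) by (simp add: o_def)
  qed
  have l2: "(\<lambda>k. 2 * dd (r (q k))) \<longlonglongrightarrow> 2 * d0"
    using LIMSEQ_subseq_LIMSEQ[OF dd_lim strict_mono_o[OF r(1) q(1)]] by (intro tendsto_intros) (simp add: o_def)
  have "dist a y0 \<le> 2 * d0"
    by (rule tendsto_le[OF _ l2 l1]) (use y(2) in auto)
  with y0 have y0P: "y0 \<in> Ph g a" by (simp add: Ph_alt0)
  have "eventually (\<lambda>k. dist (y (q k)) y0 < e) sequentially"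
    using tendstoD[OF q(2) e] by (simp add: o_def)
  then obtain k where "dist (y (q k)) y0 < e" by (meson eventually_sequentially order_refl)
  with y(3)[OF y0P, of "q k"] show False by simp
qed

lemma claim_P:
  assumes z0: "z0 \<in> Ph g a" and e: "e > 0"
  shows "eventually (\<lambda>k. \<exists>y\<in>Ph (G k) (A k). dist y z0 < e) sequentially"
proof -
  obtain c where c: "c \<in> Ep g" "d0 = dist a c"
    using infdist_attains_inf[OF closed_Ep Epg_ne] unfolding d0_def by blast
  have z0E: "z0 \<in> Ep g" and z0a: "dist a z0 \<le> 2 * d0" using z0 by (auto simp: Ph_alt0)
  show ?thesis
  proof (cases "d0 = 0")
    case True
    then have "z0 = a" using z0a by simp
    have "eventually (\<lambda>k. dist (A k) a < e/3) sequentially" using tendstoD[OF Alim, of "e/3"] e by simp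
    moreover have "eventually (\<lambda>k. dist (dd k) d0 < e/3) sequentially" using tendstoD[OF dd_lim, of "e/3"] e by simp
    ultimately show ?thesis
    proof eventually_elim
      case (elim k)
      obtain ck where ck: "ck \<in> Ep (G k)" "dd k = dist (A k) ck"
        using infdist_attains_inf[OF closed_Ep EpG_ne] unfolding dd_def by blast
      have "dd k \<ge> 0" unfolding dd_def by (rule infdist_nonneg)
      then have "ck \<in> Ph (G k) (A k)" using ck by (simp add: Ph_alt)
      moreover have "dist ck z0 < e"
      proof -
        have "dist ck z0 \<le> dist ck (A k) + dist (A k) a" using dist_triangle[of ck a "A k"] \<open>z0 = a\<close> by simp
        moreover have "dist ck (A k) = dd k" using ck by (simp add: dist_commute)
        moreover have "dd k < e/3" using elim True by (simp add: dist_real_def)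
        moreover have "dist (A k) a < e/3" using elim by simp
        ultimately show ?thesis using e by linarith
      qed
      ultimately show ?case by blast
    qed
  next
    case False
    then have dpos: "d0 > 0" using c(2) by simp
    define lam where "lam = min 1 (e / (2 * (dist z0 c + 1)))"
    have "0 < e / (2 * (dist z0 c + 1))"
      using e zero_le_dist[of z0 c] by (intro divide_pos_pos mult_pos_pos add_nonneg_pos) auto
    then have lpos: "lam > 0" "lam \<le> 1" by (auto simp: lam_def)
    have ldist: "lam * dist z0 c < e/2"
    proof -
      have "lam * dist z0 c \<le> (e / (2 * (dist z0 c + 1))) * dist z0 c"
        by (intro mult_right_mono) (auto simp: lam_def)
      also have "\<dots> < e/2" using e zero_le_dist[of z0 c] by (rule aux_frac)
      finally show ?thesis .
    qed
    define yl where "yl = (1 - lam) *\<^sub>R z0 + lam *\<^sub>R c"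
    have ylE: "yl \<in> Ep g" unfolding yl_def
      by (rule convexD[OF convex_Ep z0E c(1)]) (use lpos in auto)
    have "dist a yl \<le> (1 - lam) * dist a z0 + lam * dist a c"
    proof -
      have "a - yl = (1 - lam) *\<^sub>R (a - z0) + lam *\<^sub>R (a - c)"
        by (simp add: yl_def algebra_simps)
      then have "norm (a - yl) \<le> norm ((1 - lam) *\<^sub>R (a - z0)) + norm (lam *\<^sub>R (a - c))"
        by (metis norm_triangle_ineq)
      then show ?thesis using lpos by (simp add: dist_norm)
    qed
    also have "\<dots> \<le> (1 - lam) * (2 * d0) + lam * d0"
    proof -
      have "(1 - lam) * dist a z0 \<le> (1 - lam) * (2 * d0)"
        by (rule mult_left_mono) (use z0a lpos in auto)
      moreover have "lam * dist a c = lam * d0" using c(2) by simp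
      ultimately show ?thesis by linarith
    qed
    finally have yla: "dist a yl \<le> 2 * d0 - lam * d0" by (simp add: algebra_simps)
    have ylz: "dist yl z0 = lam * dist z0 c"
    proof -
      have "yl - z0 = lam *\<^sub>R (c - z0)" by (simp add: yl_def algebra_simps)
      then show ?thesis using lpos by (simp add: dist_norm norm_minus_commute)
    qed
    define m where "m = lam * d0 / 6"
    have mpos: "m > 0" using lpos dpos by (simp add: m_def)
    have "eventually (\<lambda>k. \<exists>w\<in>Ep (G k). dist yl w < min (e/2) m) sequentially"
    proof -
      have "min (e/2) m > 0" using e mpos by simp
      from lower[OF ylE this] show ?thesis .
    qed
    moreover have "eventually (\<lambda>k. dist (A k) a < m) sequentially" using tendstoD[OF Alim mpos] by simp
    moreover have "eventually (\<lambda>k. dist (dd k) d0 < m) sequentially" using tendstoD[OF dd_lim mpos] by simp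
    ultimately show ?thesis
    proof eventually_elim
      case (elim k)
      then obtain w where w: "w \<in> Ep (G k)" "dist yl w < min (e/2) m" by blast
      have t1: "dist (A k) w \<le> dist (A k) a + dist a yl + dist yl w"
        using dist_triangle[of "A k" w a] dist_triangle[of a w yl] by linarith
      have t2: "d0 - m < dd k" using elim(3) by (simp add: dist_real_def abs_less_iff)
      have t3: "lam * d0 = 6 * m" by (simp add: m_def)
      have t4: "dist yl w < m" "dist yl w < e/2" using w(2) by auto
      have "dist (A k) w \<le> 2 * dd k" using t1 t2 t3 t4 elim(2) yla mpos by linarith
      then have "w \<in> Ph (G k) (A k)" using w(1) by (simp add: Ph_alt)
      moreover have "dist w z0 < e"
        using dist_triangle[of w z0 yl] dist_commute[of w yl] t4 ylz ldist by linarith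
      ultimately show ?case by blast
    qed
  qed
qed

lemma part_ii:
  assumes e: "e > 0"
  shows "eventually (\<lambda>k. \<forall>z\<in>Ph g a. \<exists>y\<in>Ph (G k) (A k). dist y z \<le> e) sequentially"
proof (rule ccontr)
  assume "\<not> ?thesis"
  then have "frequently (\<lambda>k. \<exists>z\<in>Ph g a. \<forall>y\<in>Ph (G k) (A k). dist y z > e) sequentially"
    by (simp add: not_eventually not_le)
  from freq_subseq'[OF this] obtain r :: "nat \<Rightarrow> nat" where
    r: "strict_mono r" "\<And>k. \<exists>z\<in>Ph g a. \<forall>y\<in>Ph (G (r k)) (A (r k)). dist y z > e" by blast
  have "\<forall>k. \<exists>z. z \<in> Ph g a \<and> (\<forall>y\<in>Ph (G (r k)) (A (r k)). dist y z > e)" using r(2) by blast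
  from choice[OF this] obtain z where
    z: "\<forall>k. z k \<in> Ph g a \<and> (\<forall>y\<in>Ph (G (r k)) (A (r k)). dist y (z k) > e)" by blast
  have zP: "\<forall>n. z n \<in> Ph g a" using z by blast
  obtain z0 and q :: "nat \<Rightarrow> nat" where q: "z0 \<in> Ph g a" "strict_mono q" "(z \<circ> q) \<longlonglongrightarrow> z0"
    by (rule seq_compactE[OF compact_imp_seq_compact[OF Ph_compact] zP])
  have e2: "e/2 > 0" using e by simp
  have "eventually (\<lambda>k. \<exists>y\<in>Ph (G (r (q k))) (A (r (q k))). dist y z0 < e/2) sequentially"
    using eventually_subseq[OF strict_mono_o[OF r(1) q(2)] claim_P[OF q(1) e2]] by (simp add: o_def)
  moreover have "eventually (\<lambda>k. dist (z (q k)) z0 < e/2) sequentially"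
    using tendstoD[OF q(3) e2] by (simp add: o_def)
  ultimately have "eventually (\<lambda>k. False) sequentially"
  proof eventually_elim
    case (elim k)
    then obtain y where y: "y \<in> Ph (G (r (q k))) (A (r (q k)))" "dist y z0 < e/2" by blast
    have "dist y (z (q k)) > e" using z y(1) by blast
    moreover have "dist y (z (q k)) \<le> dist y z0 + dist (z (q k)) z0"
      by (rule dist_triangle2)
    ultimately show False using y(2) elim by linarith
  qed
  then show False using trivial_limit_sequentially eventually_False by auto
qed

lemma main_close:
  assumes e: "e > 0"
  shows "eventually (\<lambda>k. close_sets (Ph (G k) (A k)) (Ph g a) e) sequentially"
  using eventually_conj[OF part_i[OF e] part_ii[OF e]]
proof (rule eventually_mono)
  fix k
  assume "(\<forall>y\<in>Ph (G k) (A k). \<exists>z\<in>Ph g a. dist y z \<le> e) \<and>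
          (\<forall>z\<in>Ph g a. \<exists>y\<in>Ph (G k) (A k). dist y z \<le> e)"
  then show "close_sets (Ph (G k) (A k)) (Ph g a) e" unfolding close_sets_def by blast
qed

end


lemma dist_proj_le:
  fixes t t' :: real and x x' p a a' :: "'a::real_normed_vector" and b b' :: "'b::metric_space"
  shows "dist (t, x, p) (t', x', p) \<le> dist (t, x, b) (t', x', b')"
proof -
  have "dist (t, x, p) (t', x', p) = sqrt ((dist t t')\<^sup>2 + (dist x x')\<^sup>2)"
    by (simp add: dist_Pair_Pair)
  also have "\<dots> \<le> sqrt ((dist t t')\<^sup>2 + (dist x x')\<^sup>2 + (dist b b')\<^sup>2)"
    by (intro real_sqrt_le_mono) simp
  also have "\<dots> = dist (t, x, b) (t', x', b')"
    by (simp add: dist_Pair_Pair add.assoc)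
  finally show ?thesis .
qed

lemma hyp_convex: "hyp_H T H \<Longrightarrow> t \<in> {0..T} \<Longrightarrow> convex_on UNIV (H t x)"
  unfolding hyp_H_def by blast

lemma hyp_cont: "hyp_H T H \<Longrightarrow> t \<in> {0..T} \<Longrightarrow> continuous_on UNIV (H t x)"
proof -
  assume h: "hyp_H T H" "t \<in> {0..T}"
  then have c: "continuous_on UNIV (\<lambda>(x, p). H t x p)" unfolding hyp_H_def by blast
  have "continuous_on UNIV ((\<lambda>(x, p). H t x p) \<circ> (\<lambda>p. (x, p)))"
    by (rule continuous_on_compose) (auto intro: continuous_intros continuous_on_subset[OF c])
  then show ?thesis by (simp add: o_def)
qed

lemma steiner_e_eq: "steiner_e H t x a = steiner_point (Ph (H t x) a)"
  unfolding steiner_e_def PhiS_eq ..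

lemma dist_fst_le2: "dist (fst u) (fst v) \<le> dist u (v::'a::real_normed_vector \<times> 'b::real_normed_vector)"
proof -
  have "u - v = (fst u - fst v, snd u - snd v)" by (simp add: prod_eq_iff)
  then show ?thesis using norm_fst_le[of "fst u - fst v" "snd u - snd v"] by (simp add: dist_norm)
qed

lemma dist_snd_le2: "dist (snd u) (snd v) \<le> dist u (v::'a::real_normed_vector \<times> 'b::real_normed_vector)"
proof -
  have "u - v = (fst u - fst v, snd u - snd v)" by (simp add: prod_eq_iff)
  then show ?thesis using norm_snd_le[of "snd u - snd v" "fst u - fst v"] by (simp add: dist_norm)
qed

lemma freq_subseq2:
  fixes P :: "nat \<Rightarrow> bool"
  assumes "frequently P sequentially"
  shows "\<exists>r::nat\<Rightarrow>nat. strict_mono r \<and> (\<forall>k. P (r k))"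
proof -
  have inf: "infinite {n. P n}" using assms by (simp add: frequently_cofinite[symmetric] cofinite_eq_sequentially)
  show ?thesis
    using strict_mono_enumerate[OF inf] enumerate_in_set[OF inf] by blast
qed

lemma KL:
  fixes T :: real
    and Hs :: "nat \<Rightarrow> real \<Rightarrow> 'a::euclidean_space \<Rightarrow> 'a \<Rightarrow> real"
    and H :: "real \<Rightarrow> 'a \<Rightarrow> 'a \<Rightarrow> real"
  assumes cont_H: "continuous_on ({0..T} \<times> UNIV \<times> UNIV) (\<lambda>(t, x, p). H t x p)"
    and hyp_Hs: "\<And>i. hyp_H T (Hs i)"
    and hyp_H: "hyp_H T H"
    and conv: "\<And>K. K \<subseteq> {0..T} \<times> UNIV \<times> UNIV \<Longrightarrow> compact K \<Longrightarrow>
       uniform_limit K (\<lambda>i (t, x, p). Hs i t x p) (\<lambda>(t, x, p). H t x p) sequentially"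
    and K: "K \<subseteq> {0..T} \<times> UNIV \<times> UNIV" "compact K" and e: "e > 0"
  shows "eventually (\<lambda>i. \<forall>z\<in>K. dist (steiner_e (Hs i) (fst z) (fst (snd z)) (snd (snd z)))
            (steiner_e H (fst z) (fst (snd z)) (snd (snd z))) < e) sequentially"
proof (rule ccontr)
  define F where "F i z = steiner_e (Hs i) (fst z) (fst (snd z)) (snd (snd z))" for i z
  define F0 where "F0 z = steiner_e H (fst z) (fst (snd z)) (snd (snd z))" for z
  assume "\<not> ?thesis"
  then have "frequently (\<lambda>i. \<exists>z\<in>K. dist (F i z) (F0 z) \<ge> e) sequentially"
    by (simp add: not_eventually not_less F_def F0_def)
  from freq_subseq2[OF this] obtain r :: "nat \<Rightarrow> nat" where
    r: "strict_mono r" "\<And>k. \<exists>z\<in>K. dist (F (r k) z) (F0 z) \<ge> e" by blast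
  have "\<forall>k. \<exists>z. z \<in> K \<and> dist (F (r k) z) (F0 z) \<ge> e" using r(2) by blast
  from choice[OF this] obtain z where z: "\<forall>k. z k \<in> K \<and> dist (F (r k) (z k)) (F0 (z k)) \<ge> e" by blast
  have zK: "\<forall>n. z n \<in> K" using z by blast
  obtain z0 and q :: "nat \<Rightarrow> nat" where q: "z0 \<in> K" "strict_mono q" "(z \<circ> q) \<longlonglongrightarrow> z0"
    by (rule seq_compactE[OF compact_imp_seq_compact[OF K(2)] zK])
  define s where "s = r \<circ> q"
  have s: "strict_mono s" unfolding s_def by (rule strict_mono_o[OF r(1) q(2)])
  define \<zeta> where "\<zeta> k = z (q k)" for k
  have \<zeta>K: "\<zeta> k \<in> K" for k using zK by (simp add: \<zeta>_def)
  have "\<zeta> = z \<circ> q" by (rule ext) (simp add: \<zeta>_def)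
  then have \<zeta>lim: "\<zeta> \<longlonglongrightarrow> z0" using q(3) by simp
  define tk where "tk k = fst (\<zeta> k)" for k
  define xk where "xk k = fst (snd (\<zeta> k))" for k
  define ak where "ak k = snd (snd (\<zeta> k))" for k
  define t0 where "t0 = fst z0"
  define x0 where "x0 = fst (snd z0)"
  define a0 where "a0 = snd (snd z0)"
  have \<zeta>eq: "\<zeta> k = (tk k, xk k, ak k)" for k by (simp add: tk_def xk_def ak_def)
  have z0eq: "z0 = (t0, x0, a0)" by (simp add: t0_def x0_def a0_def)
  have tkT: "tk k \<in> {0..T}" for k using \<zeta>K[of k] K(1) \<zeta>eq[of k] by auto
  have t0T: "t0 \<in> {0..T}" using q(1) K(1) z0eq by auto
  have aklim: "ak \<longlonglongrightarrow> a0"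
    unfolding ak_def a0_def by (intro tendsto_intros \<zeta>lim)
  define S where "S = (\<lambda>z. (fst z, fst (snd z))) ` K"
  have Sc: "compact S" unfolding S_def
    by (intro compact_continuous_image K(2) continuous_intros)
  have ST: "S \<subseteq> {0..T} \<times> UNIV" using K(1) by (auto simp: S_def)
  define C where "C R = (\<lambda>u. (fst (fst u), snd (fst u), snd u)) ` (S \<times> cball (0::'a) R)" for R
  have Cc: "compact (C R)" for R unfolding C_def
    by (intro compact_continuous_image compact_Times Sc compact_cball continuous_intros)
  have CT: "C R \<subseteq> {0..T} \<times> UNIV \<times> UNIV" for R using ST by (auto simp: C_def)
  have memk: "(tk k, xk k, p) \<in> C R" if "p \<in> cball 0 R" for k p R
  proof -
    have "(tk k, xk k) = (\<lambda>z. (fst z, fst (snd z))) (\<zeta> k)" by (simp add: \<zeta>eq)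
    then have "(tk k, xk k) \<in> S" unfolding S_def using \<zeta>K[of k] by (rule image_eqI)
    then show ?thesis unfolding C_def using that by (auto intro!: image_eqI[where x="((tk k, xk k), p)"])
  qed
  have mem0: "(t0, x0, p) \<in> C R" if "p \<in> cball 0 R" for p R
  proof -
    have "(t0, x0) = (\<lambda>z. (fst z, fst (snd z))) z0" by (simp add: z0eq)
    then have "(t0, x0) \<in> S" unfolding S_def using q(1) by (rule image_eqI)
    then show ?thesis unfolding C_def using that by (auto intro!: image_eqI[where x="((t0, x0), p)"])
  qed
  let ?h = "\<lambda>(t, x, p). H t x p"
  have unif2: "eventually (\<lambda>k. \<forall>p\<in>cball 0 R. \<bar>H (tk k) (xk k) p - H t0 x0 p\<bar> \<le> e') sequentially"
    if e': "e' > 0" for R e'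
  proof -
    have "uniformly_continuous_on (C R) ?h"
      by (rule compact_uniformly_continuous[OF continuous_on_subset[OF cont_H CT] Cc])
    then obtain d where d: "d > 0" "\<forall>u\<in>C R. \<forall>u'\<in>C R. dist u' u < d \<longrightarrow> dist (?h u') (?h u) < e'"
      using e' unfolding uniformly_continuous_on_def by metis
    show ?thesis
      using tendstoD[OF \<zeta>lim d(1)]
    proof eventually_elim
      case (elim k)
      show ?case
      proof
        fix p :: 'a assume p: "p \<in> cball 0 R"
        have "dist (tk k, xk k, p) (t0, x0, p) \<le> dist (\<zeta> k) z0"
          unfolding \<zeta>eq z0eq by (rule dist_proj_le)
        then have "dist (tk k, xk k, p) (t0, x0, p) < d" using elim by simp
        from d(2)[rule_format, OF mem0[OF p] memk[OF p] this]
        have "dist (?h (tk k, xk k, p)) (?h (t0, x0, p)) < e'" .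
        then show "\<bar>H (tk k) (xk k) p - H t0 x0 p\<bar> \<le> e'" by (simp add: dist_real_def)
      qed
    qed
  qed
  have unif1: "eventually (\<lambda>k. \<forall>p\<in>cball 0 R. \<bar>Hs (s k) (tk k) (xk k) p - H t0 x0 p\<bar> \<le> e') sequentially"
    if e': "e' > 0" for R e'
  proof -
    have "uniform_limit (C R) (\<lambda>i (t, x, p). Hs i t x p) ?h sequentially"
      by (rule conv[OF CT Cc])
    then have ul: "\<forall>e>0. eventually (\<lambda>i. \<forall>u\<in>C R. dist ((\<lambda>(t, x, p). Hs i t x p) u) (?h u) < e) sequentially"
      unfolding uniform_limit_iff .
    have "e'/2 > 0" using e' by simp
    from ul[rule_format, OF this]
    have "eventually (\<lambda>i. \<forall>u\<in>C R. dist ((\<lambda>(t, x, p). Hs i t x p) u) (?h u) < e'/2) sequentially" .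
    from eventually_subseq[OF s this]
    have ev1: "eventually (\<lambda>k. \<forall>u\<in>C R. dist ((\<lambda>(t, x, p). Hs (s k) t x p) u) (?h u) < e'/2) sequentially" .
    have ev2: "eventually (\<lambda>k. \<forall>p\<in>cball 0 R. \<bar>H (tk k) (xk k) p - H t0 x0 p\<bar> \<le> e'/2) sequentially"
      using unif2[of "e'/2" R] e' by simp
    show ?thesis
      using ev1 ev2
    proof eventually_elim
      case (elim k)
      show ?case
      proof
        fix p :: 'a assume p: "p \<in> cball 0 R"
        have "dist (Hs (s k) (tk k) (xk k) p) (H (tk k) (xk k) p) < e'/2"
          using bspec[OF elim(1) memk[OF p]] by simp
        moreover have "\<bar>H (tk k) (xk k) p - H t0 x0 p\<bar> \<le> e'/2" using bspec[OF elim(2) p] .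
        ultimately show "\<bar>Hs (s k) (tk k) (xk k) p - H t0 x0 p\<bar> \<le> e'" unfolding dist_real_def by linarith
      qed
    qed
  qed
  define e' where "e' = e / (4 * real DIM('a \<times> real))"
  have e'pos: "e' > 0" using e by (simp add: e'_def)
  have cvg: "convex_on UNIV (H t0 x0)" by (rule hyp_convex[OF hyp_H t0T])
  have ctg: "continuous_on UNIV (H t0 x0)" by (rule hyp_cont[OF hyp_H t0T])
  have ev1: "eventually (\<lambda>k. close_sets (Ph (Hs (s k) (tk k) (xk k)) (ak k)) (Ph (H t0 x0) a0) e') sequentially"
  proof (rule main_close[where G="\<lambda>k. Hs (s k) (tk k) (xk k)" and g="H t0 x0" and A=ak and a=a0])
    show "\<And>k. convex_on UNIV (Hs (s k) (tk k) (xk k))" by (rule hyp_convex[OF hyp_Hs tkT])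
    show "\<And>k. continuous_on UNIV (Hs (s k) (tk k) (xk k))" by (rule hyp_cont[OF hyp_Hs tkT])
    show "\<And>R e. 0 < e \<Longrightarrow> eventually (\<lambda>k. \<forall>p\<in>cball 0 R. \<bar>Hs (s k) (tk k) (xk k) p - H t0 x0 p\<bar> \<le> e) sequentially"
      by (rule unif1)
  qed (fact cvg ctg aklim e'pos)+
  have ev2: "eventually (\<lambda>k. close_sets (Ph (H (tk k) (xk k)) (ak k)) (Ph (H t0 x0) a0) e') sequentially"
  proof (rule main_close[where G="\<lambda>k. H (tk k) (xk k)" and g="H t0 x0" and A=ak and a=a0])
    show "\<And>k. convex_on UNIV (H (tk k) (xk k))" by (rule hyp_convex[OF hyp_H tkT])
    show "\<And>k. continuous_on UNIV (H (tk k) (xk k))" by (rule hyp_cont[OF hyp_H tkT])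
    show "\<And>R e. 0 < e \<Longrightarrow> eventually (\<lambda>k. \<forall>p\<in>cball 0 R. \<bar>H (tk k) (xk k) p - H t0 x0 p\<bar> \<le> e) sequentially"
      by (rule unif2)
  qed (fact cvg ctg aklim e'pos)+
  obtain k where k1: "close_sets (Ph (Hs (s k) (tk k) (xk k)) (ak k)) (Ph (H t0 x0) a0) e'"
    and k2: "close_sets (Ph (H (tk k) (xk k)) (ak k)) (Ph (H t0 x0) a0) e'"
    using eventually_happens'[OF trivial_limit_sequentially eventually_conj[OF ev1 ev2]] by blast
  have ne: "Ph (H' t x) b \<noteq> {}" if "hyp_H T H'" "t \<in> {0..T}" for H' t x b
    by (rule Ph_nonempty[OF Ep_nonempty[OF hyp_convex[OF that] hyp_cont[OF that]]])
  have n1: "norm (steiner_point (Ph (Hs (s k) (tk k) (xk k)) (ak k)) - steiner_point (Ph (H t0 x0) a0))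
      \<le> real DIM('a \<times> real) * e'"
    by (rule steiner_diff[OF Ph_compact Ph_compact ne[OF hyp_Hs tkT] ne[OF hyp_H t0T] k1])
  have n2: "norm (steiner_point (Ph (H (tk k) (xk k)) (ak k)) - steiner_point (Ph (H t0 x0) a0))
      \<le> real DIM('a \<times> real) * e'"
    by (rule steiner_diff[OF Ph_compact Ph_compact ne[OF hyp_H tkT] ne[OF hyp_H t0T] k2])
  have "real DIM('a \<times> real) > 0" by simp
  then have "real DIM('a \<times> real) * e' = e / 4" unfolding e'_def by (simp add: field_simps)
  have "dist (F (r (q k)) (z (q k))) (F0 (z (q k)))
      = dist (steiner_point (Ph (Hs (s k) (tk k) (xk k)) (ak k))) (steiner_point (Ph (H (tk k) (xk k)) (ak k)))"
    by (simp add: F_def F0_def steiner_e_eq s_def tk_def xk_def ak_def \<zeta>_def)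
  also have "\<dots> \<le> e / 2"
    using n1 n2 \<open>real DIM('a \<times> real) * e' = e / 4\<close>
      dist_triangle2[of "steiner_point (Ph (Hs (s k) (tk k) (xk k)) (ak k))"
        "steiner_point (Ph (H (tk k) (xk k)) (ak k))" "steiner_point (Ph (H t0 x0) a0)"]
    unfolding dist_norm by linarith
  finally have "dist (F (r (q k)) (z (q k))) (F0 (z (q k))) \<le> e / 2" .
  moreover have "dist (F (r (q k)) (z (q k))) (F0 (z (q k))) \<ge> e" using z by blast
  ultimately show False using e by linarith
qed

theorem theorem4p2:
  fixes T :: real
    and Hs :: "nat \<Rightarrow> real \<Rightarrow> 'a::euclidean_space \<Rightarrow> 'a \<Rightarrow> real"
    and H :: "real \<Rightarrow> 'a \<Rightarrow> 'a \<Rightarrow> real"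
  assumes cont_Hs: "\<And>i. continuous_on ({0..T} \<times> UNIV \<times> UNIV) (\<lambda>(t, x, p). Hs i t x p)"
    and cont_H: "continuous_on ({0..T} \<times> UNIV \<times> UNIV) (\<lambda>(t, x, p). H t x p)"
    and hyp_Hs: "\<And>i. hyp_H T (Hs i)"
    and hyp_H: "hyp_H T H"
    and conv: "\<And>K. K \<subseteq> {0..T} \<times> UNIV \<times> UNIV \<Longrightarrow> compact K \<Longrightarrow>
       uniform_limit K (\<lambda>i (t, x, p). Hs i t x p) (\<lambda>(t, x, p). H t x p) sequentially"
  shows "\<forall>K. K \<subseteq> {0..T} \<times> UNIV \<times> UNIV \<longrightarrow> compact K \<longrightarrow>
       uniform_limit K (\<lambda>i (t, x, a). steiner_f (Hs i) t x a) (\<lambda>(t, x, a). steiner_f H t x a) sequentially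
     \<and> uniform_limit K (\<lambda>i (t, x, a). steiner_l (Hs i) t x a) (\<lambda>(t, x, a). steiner_l H t x a) sequentially"
proof (intro allI impI conjI)
  fix K :: "(real \<times> 'a \<times> 'a \<times> real) set"
  assume K1: "K \<subseteq> {0..T} \<times> UNIV \<times> UNIV" and K2: "compact K"
  have KL': "eventually (\<lambda>i. \<forall>z\<in>K. dist (steiner_e (Hs i) (fst z) (fst (snd z)) (snd (snd z)))
            (steiner_e H (fst z) (fst (snd z)) (snd (snd z))) < e) sequentially" if e: "e > 0" for e
    by (rule KL[where K=K, OF cont_H hyp_Hs hyp_H conv K1 K2 e])
  show "uniform_limit K (\<lambda>i (t, x, a). steiner_f (Hs i) t x a) (\<lambda>(t, x, a). steiner_f H t x a) sequentially"
    unfolding uniform_limit_iff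
  proof (intro allI impI)
    fix e :: real assume e: "e > 0"
    show "eventually (\<lambda>i. \<forall>z\<in>K. dist ((\<lambda>(t, x, a). steiner_f (Hs i) t x a) z) ((\<lambda>(t, x, a). steiner_f H t x a) z) < e) sequentially"
      using KL'[OF e]
    proof eventually_elim
      case (elim i)
      show ?case
      proof
        fix z assume "z \<in> K"
        then have "dist (steiner_e (Hs i) (fst z) (fst (snd z)) (snd (snd z))) (steiner_e H (fst z) (fst (snd z)) (snd (snd z))) < e"
          using elim by blast
        moreover obtain t x a where "z = (t, x, a)" by (cases z) auto
        ultimately show "dist ((\<lambda>(t, x, a). steiner_f (Hs i) t x a) z) ((\<lambda>(t, x, a). steiner_f H t x a) z) < e"
          using dist_fst_le2[of "steiner_e (Hs i) t x a" "steiner_e H t x a"]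
          by (simp add: steiner_f_def)
      qed
    qed
  qed
  show "uniform_limit K (\<lambda>i (t, x, a). steiner_l (Hs i) t x a) (\<lambda>(t, x, a). steiner_l H t x a) sequentially"
    unfolding uniform_limit_iff
  proof (intro allI impI)
    fix e :: real assume e: "e > 0"
    show "eventually (\<lambda>i. \<forall>z\<in>K. dist ((\<lambda>(t, x, a). steiner_l (Hs i) t x a) z) ((\<lambda>(t, x, a). steiner_l H t x a) z) < e) sequentially"
      using KL'[OF e]
    proof eventually_elim
      case (elim i)
      show ?case
      proof
        fix z assume "z \<in> K"
        then have "dist (steiner_e (Hs i) (fst z) (fst (snd z)) (snd (snd z))) (steiner_e H (fst z) (fst (snd z)) (snd (snd z))) < e"
          using elim by blast
        moreover obtain t x a where "z = (t, x, a)" by (cases z) auto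
        ultimately show "dist ((\<lambda>(t, x, a). steiner_l (Hs i) t x a) z) ((\<lambda>(t, x, a). steiner_l H t x a) z) < e"
          using dist_snd_le2[of "steiner_e (Hs i) t x a" "steiner_e H t x a"]
          by (simp add: steiner_l_def)
      qed
    qed
  qed
qed


end
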